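(* Let $n\ge 2$ and let $P\in\mathbb{R}^{n\times n}$ be a row-stochastic matrix with $p_{ii}=0$ and $p_{ij}\in[0,1]$ for all $i,j$, whose associated directed graph (edge $i\to j$ iff $p_{ij}>0$) is strongly connected. Let $\Delta_n=\{x\in\mathbb{R}^n: x\ge 0,\ \mathbb{1}_n^Tx=1\}$. (1) Let $a_i,b_i:[0,1]\to[0,1]$ ($i=1,\dots,n$) be real-analytic functions with $d_i(x_i):=1-a_i(x_i)-b_i(x_i)\neq 0$ (and $\ge 0$) for all $i$ and all $x_i\in[0,1]$. For $x\in\Delta_n$ set $A(x)=\mathrm{diag}(a_1(x_1),\dots,a_n(x_n))$, $B(x)=\mathrm{diag}(b_1(x_1),\dots,b_n(x_n))$, let $Z(x)$ be a doubly stochastic orthogonal matrix whose entries are continuous functions of $x$, and set $C(x)=(\mathbb{I}_n-A(x)-B(x))Z(x)$. Consider the self-appraisal dynamics $$x(s+1)=\big[(\mathbb{I}_n-A(x(s))-B(x(s))P)^{-1}C(x(s))\big]^T\mathbb{1}_n/n .$$ Define $$U(x)=\mathbb{1}_n\mathbb{1}_n^T/n-\big[\mathbb{I}_n-A(x)-B(x)\big]^{-1}B(x)(\mathbb{I}_n-P),$$ and let $u(x)^T$ denote the left eigenvector of $U(x)$ associated with eigenvalue $1$, normalized so that its entries sum to $1$. Then this dynamics is equivalent to $x(s+1)=F(x(s))$, where $F:\Delta_n\to\Delta_n$, $F(x)^T=u(x)^TZ(x)$, is a continuous map. (2) Let $a_i:[0,1]\to[0,1]$ ($i=1,\dots,n$)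 be real-analytic functions, $A(x)=\mathrm{diag}(a_1(x_1),\dots,a_n(x_n))$, and consider the dynamics $x(s+1)=v(x(s))$, where $v(x)\in\Delta_n$ is such that $v(x)^T$ is the left eigenvector of $A(x)+(\mathbb{I}_n-A(x))P$ associated with eigenvalue $1$. Let $p\in\Delta_n$ be such that $p^T$ is the dominant left eigenvector of $P$ (i.e. $p^TP=p^T$). Then this dynamics is equivalent to $x(s+1)=F(x(s))$, where $F:\Delta_n\to\Delta_n$ is the continuous map $$F(x)=\begin{cases} e_i, & \text{if } a_i(x_i)=1 \text{ for some } i,\\[2pt] \left(\dfrac{p_1}{1-a_1(x_1)},\dots,\dfrac{p_n}{1-a_n(x_n)}\right)^T\Big/\displaystyle\sum_{j=1}^n\frac{p_j}{1-a_j(x_j)}, & \text{otherwise.}\end{cases}$$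
   Context: $\mathbb{1}_n$ is the all-ones vector, $\mathbb{I}_n$ the identity matrix, $e_i$ the $i$-th standard basis vector, $\mathrm{diag}(\cdot)$ the diagonal matrix with the given diagonal entries. These dynamics model the evolution over a sequence of issues $s=0,1,2,\dots$ of agents' self-appraisals $x(s)\in\Delta_n$ (reflected appraisals), where in part (1) the opinions on each issue follow $y(t+1)=(A+BP)y(t)+Cy(0)$ and in part (2) they follow $y(t+1)=(A+(\mathbb{I}_n-A)P)y(t)$. In part (2) the paper implicitly assumes that for each $x\in\Delta_n$ at most one index $i$ satisfies $a_i(x_i)=1$ (so that the eigenvector $v(x)$ and the map $F$ are well defined). *)

theory Defs
  imports "HOL-Analysis.Analysis"
begin

definition prob_simplex :: "(real^'n::finite) set" where
  "prob_simplex = {x. (\<forall>i. 0 \<le> x $ i) \<and> (\<Sum>i\<in>UNIV. x $ i) = 1}"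

definition row_stochastic :: "real^'n^'n \<Rightarrow> bool" where
  "row_stochastic M \<longleftrightarrow> (\<forall>i j. 0 \<le> M $ i $ j) \<and> (\<forall>i. (\<Sum>j\<in>UNIV. M $ i $ j) = 1)"

definition doubly_stochastic :: "real^'n^'n \<Rightarrow> bool" where
  "doubly_stochastic M \<longleftrightarrow> row_stochastic M \<and> (\<forall>j. (\<Sum>i\<in>UNIV. M $ i $ j) = 1)"

definition strongly_connected_mat :: "real^'n^'n \<Rightarrow> bool" where
  "strongly_connected_mat M \<longleftrightarrow> (\<forall>i j. (i, j) \<in> {(k, l). 0 < M $ k $ l}\<^sup>*)"

definition real_analytic_on :: "(real \<Rightarrow> real) \<Rightarrow> real set \<Rightarrow> bool" where
  "real_analytic_on f S \<longleftrightarrow>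
     (\<forall>x\<in>S. \<exists>r>0. \<exists>c::nat \<Rightarrow> real. \<forall>y\<in>S. \<bar>y - x\<bar> < r \<longrightarrow> (\<lambda>k. c k * (y - x) ^ k) sums f y)"

definition diagm :: "('n::finite \<Rightarrow> real \<Rightarrow> real) \<Rightarrow> real^'n \<Rightarrow> real^'n^'n" where
  "diagm f x = (\<chi> i j. if i = j then f i (x $ i) else 0)"

definition ones_outer_n :: "real^'n::finite^'n" where
  "ones_outer_n = (\<chi> i j. 1 / real CARD('n))"

end

theory Submission
  imports Defs
begin

lemma diagm_mult_left: "(diagm f x ** Q) $ i $ j = f i (x $ i) * Q $ i $ j"
  by (simp add: diagm_def matrix_matrix_mult_def if_distrib if_distribR cong: if_cong)

lemma diagm_mult_right: "(Q ** diagm f x) $ i $ j = Q $ i $ j * f j (x $ j)"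
  by (simp add: diagm_def matrix_matrix_mult_def if_distrib if_distribR cong: if_cong)

lemma vm_diagm: "(v v* diagm f x) $ j = v $ j * f j (x $ j)"
  by (simp add: diagm_def vector_matrix_mult_def if_distrib if_distribR cong: if_cong)

lemma vm_nth: "(v v* M) $ j = (\<Sum>i\<in>UNIV. v $ i * M $ i $ j)"
  by (simp add: vector_matrix_mult_def)

lemma continuous_on_det:
  fixes f :: "'a::topological_space \<Rightarrow> real^'n::finite^'n"
  assumes "\<And>i j. continuous_on S (\<lambda>x. f x $ i $ j)"
  shows "continuous_on S (\<lambda>x. det (f x))"
  unfolding det_def
  by (intro continuous_on_sum continuous_on_mult continuous_on_const continuous_on_prod assms)

lemma analytic_cont:
  assumes "real_analytic_on f {0..1}"
  shows "continuous_on {0..1} f"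
  unfolding continuous_on_eq_continuous_within
proof
  fix x :: real assume x: "x \<in> {0..1}"
  obtain r c where r: "r > 0" and sm: "\<And>y. y\<in>{0..1} \<Longrightarrow> \<bar>y - x\<bar> < r \<Longrightarrow> (\<lambda>k. c k * (y - x) ^ k) sums f y"
    using assms x unfolding real_analytic_on_def by blast
  define \<rho> where "\<rho> = min (r/2) (1/2)"
  define y0 where "y0 = (if x \<le> 1/2 then x + \<rho> else x - \<rho>)"
  have rho: "\<rho> > 0" "\<rho> < r" using r by (auto simp: \<rho>_def)
  have y0: "y0 \<in> {0..1}" "\<bar>y0 - x\<bar> = \<rho>" using x rho by (auto simp: y0_def \<rho>_def)
  have "summable (\<lambda>k. c k * (y0 - x) ^ k)"
    using sm[OF y0(1)] y0(2) rho sums_summable by fastforce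
  hence ic: "isCont (\<lambda>z. \<Sum>k. c k * z ^ k) 0"
    by (rule isCont_powser) (use y0 rho in auto)
  define g where "g = (\<lambda>y. \<Sum>k. c k * (y - x) ^ k)"
  have "isCont g x"
    unfolding g_def
    by (rule isCont_o2[where f="\<lambda>y. y - x"]) (auto intro!: continuous_intros simp: ic)
  hence t: "(g \<longlongrightarrow> g x) (at x within {0..1})"
    using continuous_at_imp_continuous_within continuous_within by blast
  have fg: "\<And>y. y\<in>{0..1} \<Longrightarrow> \<bar>y - x\<bar> < r \<Longrightarrow> f y = g y"
    using sm unfolding g_def by (metis sums_unique)
  have "g x = f x" using fg[OF x] r by simp
  moreover have "\<forall>\<^sub>F y in at x within {0..1}. g y = f y"
    unfolding eventually_at using r fg by (auto simp: dist_real_def intro!: exI[of _ r])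
  ultimately show "continuous (at x within {0..1}) f"
    unfolding continuous_within using t by (metis (mono_tags) tendsto_cong)
qed


lemma simplex_comp: "x \<in> prob_simplex \<Longrightarrow> x $ i \<in> {0..1}"
proof -
  assume x: "x \<in> prob_simplex"
  hence nn: "\<forall>i. 0 \<le> x $ i" and s: "(\<Sum>i\<in>UNIV. x $ i) = 1" by (auto simp: prob_simplex_def)
  have "x $ i \<le> (\<Sum>i\<in>UNIV. x $ i)" by (rule member_le_sum) (auto simp: nn)
  thus ?thesis using nn s by auto
qed

lemma cont_comp_simplex:
  assumes "real_analytic_on f {0..1}"
  shows "continuous_on prob_simplex (\<lambda>x::real^'n::finite. f (x $ i))"
proof (rule continuous_on_compose2[OF analytic_cont[OF assms]])
  show "continuous_on prob_simplex (\<lambda>x::real^'n. x $ i)" by (intro continuous_intros)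
  show "(\<lambda>x::real^'n. x $ i) ` prob_simplex \<subseteq> {0..1}" using simplex_comp by blast
qed

lemma stat_zero:
  fixes P :: "real^'n::finite^'n"
  assumes P: "row_stochastic P" and sc: "strongly_connected_mat P"
    and nn: "\<forall>k. 0 \<le> u $ k" and st: "u v* P = u" and z: "u $ j = 0"
  shows "u = 0"
proof -
  have "u $ i = 0" for i
  proof -
    have "(i, j) \<in> {(k, l). 0 < P $ k $ l}\<^sup>*" using sc unfolding strongly_connected_mat_def by blast
    thus ?thesis
    proof (induction rule: converse_rtrancl_induct)
      case base then show ?case using z .
    next
      case (step y z)
      have pyz: "0 < P $ y $ z" using step.hyps(1) by simp
      have "u $ z = (\<Sum>k\<in>UNIV. u $ k * P $ k $ z)" using st by (metis vm_nth)
      moreover have "u $ y * P $ y $ z \<le> (\<Sum>k\<in>UNIV. u $ k * P $ k $ z)"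
        by (rule member_le_sum) (use nn P in \<open>auto simp: row_stochastic_def\<close>)
      ultimately have "u $ y * P $ y $ z \<le> 0" using step.IH by simp
      hence "u $ y \<le> 0" using pyz by (simp add: mult_le_0_iff)
      thus ?case using nn by (meson order_antisym)
    qed
  qed
  thus ?thesis by (simp add: vec_eq_iff)
qed

lemma stat_pos:
  fixes P :: "real^'n::finite^'n"
  assumes P: "row_stochastic P" and sc: "strongly_connected_mat P"
    and p: "p \<in> prob_simplex" and st: "p v* P = p"
  shows "0 < p $ k"
proof (rule ccontr)
  assume "\<not> 0 < p $ k"
  hence "p $ k = 0" using p by (auto simp: prob_simplex_def intro: order_antisym)
  hence "p = 0" using stat_zero[OF P sc _ st] p by (auto simp: prob_simplex_def)
  thus False using p by (simp add: prob_simplex_def)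
qed

lemma stat_prop:
  fixes P :: "real^'n::finite^'n"
  assumes P: "row_stochastic P" and sc: "strongly_connected_mat P"
    and p: "p \<in> prob_simplex" and st: "p v* P = p"
    and nn: "\<forall>k. 0 \<le> w $ k" and wst: "w v* P = w"
  shows "\<exists>c. w = c *\<^sub>R p"
proof -
  have pp: "\<And>k. 0 < p $ k" using stat_pos[OF P sc p st] .
  define c where "c = Min ((\<lambda>k. w $ k / p $ k) ` UNIV)"
  have "c \<in> range (\<lambda>k. w $ k / p $ k)" unfolding c_def by (rule Min_in) auto
  then obtain k0 where k0: "c = w $ k0 / p $ k0" by auto
  have cle: "c \<le> w $ k / p $ k" for k unfolding c_def by (rule Min_le) auto
  define u where "u = w - c *\<^sub>R p"
  have unn: "\<forall>k. 0 \<le> u $ k"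
  proof
    fix k
    have "c * p $ k \<le> w $ k" using cle[of k] pp[of k] by (simp add: pos_le_divide_eq)
    thus "0 \<le> u $ k" by (simp add: u_def)
  qed
  have ust: "u v* P = u"
    by (simp add: u_def vector_matrix_mult_diff_distrib scaleR_vector_matrix_assoc wst st)
  have "u $ k0 = 0" using k0 pp[of k0] by (simp add: u_def)
  hence "u = 0" by (rule stat_zero[OF P sc unn ust])
  thus ?thesis by (auto simp: u_def)
qed

lemma neg_part_lemma:
  fixes P :: "real^'n::finite^'n" and y \<gamma> g :: "'n \<Rightarrow> real"
  assumes P: "row_stochastic P" and gam: "\<forall>k. 0 \<le> \<gamma> k \<and> \<gamma> k < 1"
    and g: "\<forall>j. 0 \<le> g j" and eq: "\<forall>j. y j - (\<Sum>k\<in>UNIV. y k * \<gamma> k * P $ k $ j) = g j"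
  shows "0 \<le> y k"
proof -
  define n where "n k = max 0 (- y k)" for k
  have Pnn: "\<And>k j. 0 \<le> P $ k $ j" and Ps: "\<And>k. (\<Sum>j\<in>UNIV. P $ k $ j) = 1"
    using P by (auto simp: row_stochastic_def)
  have nj: "n j \<le> (\<Sum>k\<in>UNIV. n k * \<gamma> k * P $ k $ j)" for j
  proof -
    have "- y j \<le> (\<Sum>k\<in>UNIV. (- y k) * \<gamma> k * P $ k $ j)"
      using eq[rule_format, of j] g[rule_format, of j] by (simp add: sum_negf)
    also have "\<dots> \<le> (\<Sum>k\<in>UNIV. n k * \<gamma> k * P $ k $ j)"
    proof (rule sum_mono)
      fix k
      have "0 \<le> \<gamma> k * P $ k $ j" using gam Pnn by simp
      hence "(- y k) * (\<gamma> k * P $ k $ j) \<le> n k * (\<gamma> k * P $ k $ j)"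
        by (rule mult_right_mono[rotated]) (simp add: n_def)
      thus "(- y k) * \<gamma> k * P $ k $ j \<le> n k * \<gamma> k * P $ k $ j" by (simp add: mult.assoc)
    qed
    finally have "- y j \<le> (\<Sum>k\<in>UNIV. n k * \<gamma> k * P $ k $ j)" .
    moreover have "0 \<le> (\<Sum>k\<in>UNIV. n k * \<gamma> k * P $ k $ j)"
    proof (rule sum_nonneg)
      fix k
      have "0 \<le> n k" by (simp add: n_def)
      moreover have "0 \<le> \<gamma> k" using gam by blast
      ultimately show "0 \<le> n k * \<gamma> k * P $ k $ j" using Pnn by simp
    qed
    ultimately show ?thesis unfolding n_def by simp
  qed
  have "(\<Sum>j\<in>UNIV. n j) \<le> (\<Sum>j\<in>UNIV. \<Sum>k\<in>UNIV. n k * \<gamma> k * P $ k $ j)"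
    by (rule sum_mono) (rule nj)
  also have "\<dots> = (\<Sum>k\<in>UNIV. n k * \<gamma> k * (\<Sum>j\<in>UNIV. P $ k $ j))"
    by (subst sum.swap) (simp add: sum_distrib_left)
  also have "\<dots> = (\<Sum>k\<in>UNIV. n k * \<gamma> k)" by (simp add: Ps)
  finally have "(\<Sum>k\<in>UNIV. n k * (1 - \<gamma> k)) \<le> 0"
    by (simp add: algebra_simps sum_subtractf)
  moreover have "\<forall>k. 0 \<le> n k * (1 - \<gamma> k)"
  proof
    fix k
    have "\<gamma> k < 1" using gam by blast
    moreover have "0 \<le> n k" by (simp add: n_def)
    ultimately show "0 \<le> n k * (1 - \<gamma> k)" by simp
  qed
  ultimately have "(\<Sum>k\<in>UNIV. n k * (1 - \<gamma> k)) = 0"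
    by (meson order_antisym sum_nonneg)
  hence "\<forall>k\<in>UNIV. n k * (1 - \<gamma> k) = 0"
    using sum_nonneg_eq_0_iff[of UNIV "\<lambda>k. n k * (1 - \<gamma> k)"] \<open>\<forall>k. 0 \<le> n k * (1 - \<gamma> k)\<close> by simp
  hence e: "n k * (1 - \<gamma> k) = 0" by blast
  have "1 - \<gamma> k \<noteq> 0" using gam by (metis less_irrefl eq_iff_diff_eq_0)
  with e have "n k = 0" by simp
  thus ?thesis by (simp add: n_def)
qed

lemma matrix_inv_props:
  fixes A :: "real^'n::finite^'n"
  assumes "invertible A"
  shows "A ** matrix_inv A = mat 1" "matrix_inv A ** A = mat 1"
  using someI_ex[OF assms[unfolded invertible_def]] unfolding matrix_inv_def by auto

lemma matrix_inv_eqI: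
  fixes A B :: "real^'n::finite^'n"
  assumes "A ** B = mat 1" "B ** A = mat 1"
  shows "matrix_inv A = B"
proof -
  have inv: "invertible A" using assms unfolding invertible_def by blast
  have "matrix_inv A = matrix_inv A ** (A ** B)" by (simp add: assms)
  also have "\<dots> = (matrix_inv A ** A) ** B" by (simp add: matrix_mul_assoc)
  also have "\<dots> = B" by (simp add: matrix_inv_props(2)[OF inv])
  finally show ?thesis .
qed


lemma onediag_mult: "((mat 1 - diagm f x) ** Q) $ i $ j = (1 - f i (x $ i)) * Q $ i $ j"
  by (simp add: diagm_def mat_def matrix_matrix_mult_def if_distrib if_distribR left_diff_distrib
      sum_subtractf cong: if_cong)

lemma part2_eqn:
  fixes P :: "real^'n::finite^'n"
  shows "(v v* (diagm a x + (mat 1 - diagm a x) ** P) = v) \<longleftrightarrow>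
         ((\<chi> k. (1 - a k (x $ k)) * v $ k) v* P = (\<chi> k. (1 - a k (x $ k)) * v $ k))"
proof -
  have e: "(v v* (diagm a x + (mat 1 - diagm a x) ** P)) $ j =
        v $ j * a j (x $ j) + ((\<chi> k. (1 - a k (x $ k)) * v $ k) v* P) $ j" for j
    by (simp add: vector_matrix_mult_add_rdistrib vm_diagm[unfolded vm_nth] onediag_mult
        vm_nth algebra_simps sum_subtractf)
  show ?thesis
    unfolding vec_eq_iff e by (auto simp: algebra_simps)
qed


lemma part2:
  fixes P :: "real^'n::finite^'n" and a :: "'n \<Rightarrow> real \<Rightarrow> real" and p :: "real^'n"
  assumes P: "row_stochastic P" and sc: "strongly_connected_mat P"
    and an: "\<forall>i. real_analytic_on (a i) {0..1} \<and> (\<forall>t\<in>{0..1}. a i t \<in> {0..1})"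
    and uq: "\<forall>x\<in>prob_simplex. \<forall>i j. a i (x $ i) = 1 \<and> a j (x $ j) = 1 \<longrightarrow> i = j"
    and p: "p \<in> prob_simplex" and st: "p v* P = p"
  shows "let F = (\<lambda>x. if \<exists>i. a i (x $ i) = 1 then axis (THE i. a i (x $ i) = 1) 1
                    else (1 / (\<Sum>j\<in>UNIV. p $ j / (1 - a j (x $ j))))
                         *\<^sub>R (\<chi> i. p $ i / (1 - a i (x $ i))))
       in (\<forall>x\<in>prob_simplex. F x \<in> prob_simplex \<and>
             (\<forall>v\<in>prob_simplex. v v* (diagm a x + (mat 1 - diagm a x) ** P) = v \<longleftrightarrow> v = F x))
          \<and> continuous_on prob_simplex F"
proof -
  define F where "F = (\<lambda>x. if \<exists>i. a i (x $ i) = 1 then axis (THE i. a i (x $ i) = 1) 1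
                    else (1 / (\<Sum>j\<in>UNIV. p $ j / (1 - a j (x $ j))))
                         *\<^sub>R (\<chi> i. p $ i / (1 - a i (x $ i))))"
  define q where "q = (\<lambda>x::real^'n. \<chi> k. p $ k * (\<Prod>l\<in>UNIV-{k}. 1 - a l (x $ l)))"
  define S where "S = (\<lambda>x. \<Sum>k\<in>UNIV. q x $ k)"
  define pr where "pr = (\<lambda>x::real^'n. \<Prod>l\<in>UNIV. 1 - a l (x $ l))"
  have pp: "\<And>k. 0 < p $ k" using stat_pos[OF P sc p st] .
  have arng: "\<And>x l. x \<in> prob_simplex \<Longrightarrow> 0 \<le> a l (x $ l) \<and> a l (x $ l) \<le> 1"
    using an simplex_comp by fastforce
  have qnn: "\<And>x k. x \<in> prob_simplex \<Longrightarrow> 0 \<le> q x $ k"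
    unfolding q_def using arng pp by (auto intro!: mult_nonneg_nonneg prod_nonneg simp: less_imp_le)
  have qpr: "(1 - a k (x $ k)) * q x $ k = pr x * p $ k" for x k
  proof -
    have "pr x = (1 - a k (x $ k)) * (\<Prod>l\<in>UNIV-{k}. 1 - a l (x $ l))"
      unfolding pr_def by (rule prod.remove) auto
    thus ?thesis unfolding q_def by simp
  qed
  have k0: "\<exists>k. \<forall>l. l \<noteq> k \<longrightarrow> a l (x $ l) < 1" if x: "x \<in> prob_simplex" for x
  proof (cases "\<exists>i. a i (x $ i) = 1")
    case True
    then obtain i where i: "a i (x $ i) = 1" by blast
    show ?thesis
      using uq x i arng[OF x] by (metis less_eq_real_def)
  next
    case False
    thus ?thesis using arng[OF x] by (metis less_eq_real_def)
  qed
  have Spos: "0 < S x" if x: "x \<in> prob_simplex" for x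
  proof -
    obtain k where k: "\<forall>l. l \<noteq> k \<longrightarrow> a l (x $ l) < 1" using k0[OF x] by blast
    have "0 < q x $ k" unfolding q_def vec_lambda_beta using k pp by (intro mult_pos_pos prod_pos) auto
    also have "q x $ k \<le> S x" unfolding S_def by (rule member_le_sum) (auto simp: qnn x)
    finally show ?thesis .
  qed
  have FqS: "F x = (1 / S x) *\<^sub>R q x" if x: "x \<in> prob_simplex" for x
  proof (cases "\<exists>i. a i (x $ i) = 1")
    case True
    then obtain i where i: "a i (x $ i) = 1" by blast
    have the: "(THE i. a i (x $ i) = 1) = i" using uq x i by (intro the_equality) auto
    have q0: "q x $ l = 0" if "l \<noteq> i" for l
      unfolding q_def using that i by (auto intro!: bexI[of _ i])
    have "S x = q x $ i + (\<Sum>k\<in>UNIV-{i}. q x $ k)" unfolding S_def by (rule sum.remove) auto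
    also have "(\<Sum>k\<in>UNIV-{i}. q x $ k) = 0" by (rule sum.neutral) (use q0 in auto)
    finally have Si: "S x = q x $ i" by simp
    have "F x = axis i 1" unfolding F_def using True the by simp
    also have "\<dots> = (1 / S x) *\<^sub>R q x"
      using Spos[OF x] q0 unfolding Si by (auto simp: vec_eq_iff axis_def)
    finally show ?thesis .
  next
    case False
    have lt: "a l (x $ l) < 1" for l using False arng[OF x, of l] by (auto simp: less_eq_real_def)
    have prp: "0 < pr x" unfolding pr_def using lt by (intro prod_pos) auto
    have qk: "q x $ k = pr x * (p $ k / (1 - a k (x $ k)))" for k
      using qpr[of k x] lt[of k] by (simp add: field_simps)
    have Seq: "S x = pr x * (\<Sum>j\<in>UNIV. p $ j / (1 - a j (x $ j)))"
      unfolding S_def qk by (simp add: sum_distrib_left)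
    show ?thesis
      unfolding F_def using False prp by (simp add: vec_eq_iff qk Seq)
  qed
  have Fin: "F x \<in> prob_simplex" if x: "x \<in> prob_simplex" for x
  proof -
    have "(\<Sum>k\<in>UNIV. (1 / S x) * q x $ k) = 1"
    proof -
      have "(\<Sum>k\<in>UNIV. (1 / S x) * q x $ k) = (1 / S x) * S x"
        unfolding S_def by (rule sum_distrib_left[symmetric])
      thus ?thesis using Spos[OF x] by simp
    qed
    thus ?thesis using FqS[OF x] Spos[OF x] qnn[OF x] by (simp add: prob_simplex_def)
  qed
  have eqv: "v v* (diagm a x + (mat 1 - diagm a x) ** P) = v \<longleftrightarrow> v = F x"
    if x: "x \<in> prob_simplex" and v: "v \<in> prob_simplex" for x v
  proof -
    define wv where "wv = (\<chi> k. (1 - a k (x $ k)) * v $ k)"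
    have "v v* (diagm a x + (mat 1 - diagm a x) ** P) = v \<longleftrightarrow> wv v* P = wv"
      unfolding wv_def by (rule part2_eqn)
    also have "\<dots> \<longleftrightarrow> v = F x"
    proof
      assume wst: "wv v* P = wv"
      have wnn: "\<forall>k. 0 \<le> wv $ k" using arng[OF x] v by (auto simp: wv_def prob_simplex_def)
      obtain c where c: "wv = c *\<^sub>R p" using stat_prop[OF P sc p st wnn wst] by blast
      have ck: "(1 - a k (x $ k)) * v $ k = c * p $ k" for k
        using c by (auto simp: wv_def vec_eq_iff)
      have "\<exists>lam. v = lam *\<^sub>R q x"
      proof (cases "\<exists>i. a i (x $ i) = 1")
        case True
        then obtain i where i: "a i (x $ i) = 1" by blast
        have lt: "l \<noteq> i \<Longrightarrow> a l (x $ l) < 1" for l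
          using uq x i arng[OF x, of l] by (auto simp: less_eq_real_def)
        have "c * p $ i = 0" using ck[of i] i by simp
        hence c0: "c = 0" using pp[of i] by simp
        have v0: "v $ l = 0" if "l \<noteq> i" for l using ck[of l] c0 lt[OF that] by simp
        have q0: "q x $ l = 0" if "l \<noteq> i" for l
          unfolding q_def using that i by (auto intro!: bexI[of _ i])
        have qi: "0 < q x $ i"
          unfolding q_def vec_lambda_beta using lt pp by (intro mult_pos_pos prod_pos) auto
        show ?thesis
        proof (rule exI[of _ "v $ i / q x $ i"], unfold vec_eq_iff, intro allI)
          fix k show "v $ k = ((v $ i / q x $ i) *\<^sub>R q x) $ k"
            using qi v0[of k] q0[of k] by (cases "k = i") auto
        qed
      next
        case False
        have lt: "a l (x $ l) < 1" for l using False arng[OF x, of l] by (auto simp: less_eq_real_def)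
        have prp: "0 < pr x" unfolding pr_def using lt by (intro prod_pos) auto
        show ?thesis
        proof (rule exI[of _ "c / pr x"], unfold vec_eq_iff, intro allI)
          fix k
          have "v $ k = c * p $ k / (1 - a k (x $ k))" using ck[of k] lt[of k] by (simp add: field_simps)
          also have "\<dots> = (c / pr x) * q x $ k"
          proof -
            have "q x $ k = pr x * p $ k / (1 - a k (x $ k))"
              using qpr[of k x] lt[of k] by (simp add: field_simps)
            thus ?thesis using prp by simp
          qed
          finally show "v $ k = ((c / pr x) *\<^sub>R q x) $ k" by simp
        qed
      qed
      then obtain lam where l: "v = lam *\<^sub>R q x" by blast
      have "1 = (\<Sum>k\<in>UNIV. v $ k)" using v by (simp add: prob_simplex_def)
      also have "\<dots> = lam * S x" unfolding l S_def by (simp add: sum_distrib_left)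
      finally have "lam = 1 / S x" using Spos[OF x] by (simp add: field_simps)
      thus "v = F x" using l FqS[OF x] by simp
    next
      assume vF: "v = F x"
      have "wv = (pr x / S x) *\<^sub>R p"
        unfolding wv_def vF FqS[OF x] using qpr by (simp add: vec_eq_iff algebra_simps)
      thus "wv v* P = wv" by (simp add: scaleR_vector_matrix_assoc st)
    qed
    finally show ?thesis .
  qed
  have qc: "continuous_on prob_simplex (\<lambda>x. q x $ k)" for k
    unfolding q_def vec_lambda_beta
    using an by (intro continuous_intros cont_comp_simplex) auto
  have qcv: "continuous_on prob_simplex q"
    unfolding q_def using an by (intro continuous_on_vec_lambda continuous_intros cont_comp_simplex) auto
  have Sc: "continuous_on prob_simplex S"
    unfolding S_def by (intro continuous_intros qc)
  have "continuous_on prob_simplex (\<lambda>x. (1 / S x) *\<^sub>R q x)"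
    by (intro continuous_intros Sc qcv) (use Spos in fastforce)
  hence Fc: "continuous_on prob_simplex F"
    by (rule continuous_on_cong[THEN iffD1, rotated 2]) (auto simp: FqS)
  have "(\<forall>x\<in>prob_simplex. F x \<in> prob_simplex \<and>
             (\<forall>v\<in>prob_simplex. v v* (diagm a x + (mat 1 - diagm a x) ** P) = v \<longleftrightarrow> v = F x))
          \<and> continuous_on prob_simplex F"
    using Fin eqv Fc by blast
  thus ?thesis unfolding Let_def F_def .
qed


lemma diagm_diagm: "diagm f x ** diagm g x = diagm (\<lambda>i s. f i s * g i s) x"
  by (simp add: vec_eq_iff diagm_mult_left) (simp add: diagm_def)

lemma part1:
  fixes P :: "real^'n::finite^'n" and a b :: "'n \<Rightarrow> real \<Rightarrow> real" and Z :: "real^'n \<Rightarrow> real^'n^'n"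
  assumes P: "row_stochastic P" and Pd: "\<forall>i. P $ i $ i = 0"
    and hyp: "\<forall>i. real_analytic_on (a i) {0..1} \<and> real_analytic_on (b i) {0..1}
           \<and> (\<forall>t\<in>{0..1}. a i t \<in> {0..1} \<and> b i t \<in> {0..1}
                \<and> 1 - a i t - b i t \<noteq> 0 \<and> 1 - a i t - b i t \<ge> 0)"
    and Zh: "\<forall>x\<in>prob_simplex. doubly_stochastic (Z x) \<and> orthogonal_matrix (Z x)"
    and Zc: "\<forall>i j. continuous_on prob_simplex (\<lambda>x. Z x $ i $ j)"
  shows "let G = (\<lambda>x. transpose (matrix_inv (mat 1 - diagm a x - diagm b x ** P)
                                 ** ((mat 1 - diagm a x - diagm b x) ** Z x))
                     *v (\<chi> i. 1 / real CARD('n)));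
           U = (\<lambda>x. ones_outer_n - matrix_inv (mat 1 - diagm a x - diagm b x) ** diagm b x ** (mat 1 - P));
           F = (\<lambda>x. (THE u. u v* U x = u \<and> (\<Sum>i\<in>UNIV. u $ i) = 1) v* Z x)
       in (\<forall>x\<in>prob_simplex. (\<exists>!u. u v* U x = u \<and> (\<Sum>i\<in>UNIV. u $ i) = 1)
                        \<and> G x = F x \<and> F x \<in> prob_simplex)
          \<and> continuous_on prob_simplex F"
proof -
  define c :: "real^'n" where "c = (\<chi> i. 1 / real CARD('n))"
  define M where "M = (\<lambda>x. mat 1 - diagm a x - diagm b x ** P)"
  define D where "D = (\<lambda>x. mat 1 - diagm a x - diagm b x)"
  define Dinv where "Dinv = (\<lambda>x. diagm (\<lambda>i s. 1 / (1 - a i s - b i s)) x)"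
  define G where "G = (\<lambda>x. transpose (matrix_inv (M x) ** (D x ** Z x)) *v c)"
  define U where "U = (\<lambda>x. ones_outer_n - matrix_inv (D x) ** diagm b x ** (mat 1 - P))"
  define F where "F = (\<lambda>x. (THE u. u v* U x = u \<and> (\<Sum>i\<in>UNIV. u $ i) = 1) v* Z x)"
  define t where "t = (\<lambda>x. c v* matrix_inv (M x))"
  define w where "w = (\<lambda>x. t x v* D x)"
  have Pnn: "\<And>k j. 0 \<le> P $ k $ j" and Ps: "\<And>k. (\<Sum>j\<in>UNIV. P $ k $ j) = 1"
    using P by (auto simp: row_stochastic_def)
  have rng: "0 \<le> a k (x $ k) \<and> 0 \<le> b k (x $ k) \<and> 0 < 1 - a k (x $ k) - b k (x $ k)"
    if x: "x \<in> prob_simplex" for x k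
    using hyp simplex_comp[OF x, of k] by (fastforce simp: less_eq_real_def)
  have Ment: "M x $ i $ j = (if i = j then 1 - a i (x $ i) else 0) - b i (x $ i) * P $ i $ j" for x i j
    unfolding M_def by (simp add: diagm_mult_left) (simp add: diagm_def mat_def)
  have Ddiag: "D x = diagm (\<lambda>i s. 1 - a i s - b i s) x" for x
    unfolding D_def by (simp add: vec_eq_iff diagm_def mat_def)
  have MDB: "M x = D x + diagm b x ** (mat 1 - P)" for x
    unfolding vec_eq_iff Ment by (simp add: Ddiag diagm_mult_left) (simp add: diagm_def mat_def algebra_simps)
  have vM: "(z v* M x) $ j = z $ j * (1 - a j (x $ j)) - (\<Sum>k\<in>UNIV. z $ k * b k (x $ k) * P $ k $ j)" for z x j
  proof -
    have "(\<Sum>i\<in>UNIV. z $ i * M x $ i $ j) = (\<Sum>i\<in>UNIV. (if i = j then z $ j * (1 - a j (x $ j)) else 0) - z $ i * b i (x $ i) * P $ i $ j)"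
      by (rule sum.cong) (auto simp: Ment algebra_simps)
    thus ?thesis unfolding vm_nth by (simp add: sum_subtractf)
  qed
  have znn: "0 \<le> z $ k" if x: "x \<in> prob_simplex" and g: "\<forall>j. 0 \<le> (z v* M x) $ j" for x z k
  proof -
    define y where "y = (\<lambda>k. z $ k * (1 - a k (x $ k)))"
    define \<gamma> where "\<gamma> = (\<lambda>k. b k (x $ k) / (1 - a k (x $ k)))"
    have a1: "0 < 1 - a k (x $ k)" for k using rng[OF x, of k] by linarith
    have gam: "\<forall>k. 0 \<le> \<gamma> k \<and> \<gamma> k < 1"
    proof
      fix k show "0 \<le> \<gamma> k \<and> \<gamma> k < 1"
        using rng[OF x, of k] a1[of k] by (simp add: \<gamma>_def divide_simps)
    qed
    have yg: "y k * \<gamma> k = z $ k * b k (x $ k)" for k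
      using a1[of k] by (simp add: y_def \<gamma>_def)
    have eq: "\<forall>j. y j - (\<Sum>k\<in>UNIV. y k * \<gamma> k * P $ k $ j) = (z v* M x) $ j"
      by (simp add: vM yg) (simp add: y_def)
    have "0 \<le> y k" by (rule neg_part_lemma[OF P gam _ eq]) (use g in auto)
    thus ?thesis using a1[of k] by (simp add: y_def zero_le_mult_iff)
  qed
  have inj: "z = 0" if x: "x \<in> prob_simplex" and z: "z v* M x = 0" for x z
  proof -
    have "((- z) v* M x) $ j = - (z v* M x) $ j" for j by (simp add: vm_nth sum_negf)
    hence n: "\<forall>j. 0 \<le> ((- z) v* M x) $ j" using z by simp
    have "0 \<le> z $ k" "0 \<le> (- z) $ k" for k
      using znn[OF x, of z k] znn[OF x, of "- z" k] n z by auto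
    thus ?thesis by (simp add: vec_eq_iff order_antisym)
  qed
  have invM: "invertible (M x)" if x: "x \<in> prob_simplex" for x
  proof -
    have "\<forall>z. transpose (M x) *v z = 0 \<longrightarrow> z = 0" using inj[OF x] by simp
    hence "\<exists>B. B ** transpose (M x) = mat 1" by (simp add: matrix_left_invertible_ker)
    hence "\<exists>B. M x ** B = mat 1" by (simp add: left_invertible_transpose)
    thus ?thesis by (simp add: invertible_right_inverse)
  qed
  have DinvD: "Dinv x ** D x = mat 1" "D x ** Dinv x = mat 1" if x: "x \<in> prob_simplex" for x
    using rng[OF x] unfolding Ddiag Dinv_def diagm_diagm
    by (auto simp: vec_eq_iff diagm_def mat_def) (metis less_irrefl)+
  have invD: "matrix_inv (D x) = Dinv x" if x: "x \<in> prob_simplex" for x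
    by (rule matrix_inv_eqI) (use DinvD[OF x] in auto)
  have tM: "t x v* M x = c" if x: "x \<in> prob_simplex" for x
    unfolding t_def by (simp add: vector_matrix_mul_assoc matrix_inv_props(2)[OF invM[OF x]])
  have cnn: "0 \<le> c $ j" for j by (simp add: c_def)
  have tnn: "0 \<le> t x $ k" if x: "x \<in> prob_simplex" for x k
    by (rule znn[OF x]) (simp add: tM[OF x] cnn)
  have wk: "w x $ k = t x $ k * (1 - a k (x $ k) - b k (x $ k))" for x k
    unfolding w_def Ddiag vm_diagm ..
  have wnn: "0 \<le> w x $ k" if x: "x \<in> prob_simplex" for x k
    unfolding wk using tnn[OF x, of k] rng[OF x, of k] by simp
  have csum: "(\<Sum>j\<in>UNIV. c $ j) = 1" by (simp add: c_def)
  have wsum: "(\<Sum>k\<in>UNIV. w x $ k) = 1" if x: "x \<in> prob_simplex" for x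
  proof -
    have "(\<Sum>j\<in>UNIV. (t x v* M x) $ j) = (\<Sum>j\<in>UNIV. t x $ j * (1 - a j (x $ j)))
            - (\<Sum>j\<in>UNIV. \<Sum>k\<in>UNIV. t x $ k * b k (x $ k) * P $ k $ j)"
      unfolding vM by (simp add: sum_subtractf)
    also have "(\<Sum>j\<in>UNIV. \<Sum>k\<in>UNIV. t x $ k * b k (x $ k) * P $ k $ j)
        = (\<Sum>k\<in>UNIV. t x $ k * b k (x $ k) * (\<Sum>j\<in>UNIV. P $ k $ j))"
      by (subst sum.swap) (simp add: sum_distrib_left)
    also have "\<dots> = (\<Sum>k\<in>UNIV. t x $ k * b k (x $ k))" by (simp add: Ps)
    finally have "(\<Sum>j\<in>UNIV. (t x v* M x) $ j) = (\<Sum>k\<in>UNIV. w x $ k)"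
      unfolding wk by (simp add: sum_subtractf[symmetric] algebra_simps)
    thus ?thesis using tM[OF x] csum by simp
  qed
  have wDinv: "w x v* Dinv x = t x" if x: "x \<in> prob_simplex" for x
    unfolding w_def by (simp add: vector_matrix_mul_assoc DinvD[OF x])
  have Jc: "u v* ones_outer_n = c" if "(\<Sum>i\<in>UNIV. u $ i) = 1" for u :: "real^'n"
  proof -
    have "(\<Sum>i\<in>UNIV. u $ i * (1 / real CARD('n))) = (\<Sum>i\<in>UNIV. u $ i) * (1 / real CARD('n))"
      by (rule sum_distrib_right[symmetric])
    thus ?thesis using that by (simp add: vec_eq_iff vm_nth ones_outer_n_def c_def)
  qed
  have Ukey: "u v* U x = u \<longleftrightarrow> (u v* Dinv x) v* M x = c"
    if x: "x \<in> prob_simplex" and us: "(\<Sum>i\<in>UNIV. u $ i) = 1" for x u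
  proof -
    define X where "X = u v* (Dinv x ** diagm b x ** (mat 1 - P))"
    have e1: "(u v* Dinv x) v* M x = u + X"
      unfolding MDB X_def vector_matrix_mult_add_rdistrib vector_matrix_mul_assoc
      by (simp add: DinvD[OF x] matrix_mul_assoc)
    have e2: "u v* U x = c - X"
      unfolding U_def X_def vector_matrix_mult_diff_rdistrib invD[OF x] Jc[OF us] ..
    show ?thesis unfolding e1 e2 by (auto simp: algebra_simps)
  qed
  have wU: "w x v* U x = w x \<and> (\<Sum>i\<in>UNIV. w x $ i) = 1" if x: "x \<in> prob_simplex" for x
    using Ukey[OF x wsum[OF x]] wDinv[OF x] tM[OF x] wsum[OF x] by simp
  have uniq: "u = w x" if x: "x \<in> prob_simplex" and u: "u v* U x = u \<and> (\<Sum>i\<in>UNIV. u $ i) = 1" for x u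
  proof -
    have "(u v* Dinv x) v* M x = c" using Ukey[OF x] u by blast
    hence "(u v* Dinv x - t x) v* M x = 0" using tM[OF x] by (simp add: vector_matrix_mult_diff_distrib)
    hence "u v* Dinv x - t x = 0" by (rule inj[OF x])
    hence e: "u v* Dinv x = t x" by simp
    have "u = u v* (Dinv x ** D x)" by (simp add: DinvD[OF x])
    also have "\<dots> = w x" unfolding w_def e[symmetric] by (simp add: vector_matrix_mul_assoc)
    finally show ?thesis .
  qed
  have ex1: "\<exists>!u. u v* U x = u \<and> (\<Sum>i\<in>UNIV. u $ i) = 1" if x: "x \<in> prob_simplex" for x
    using wU[OF x] uniq[OF x] by blast
  have Fw: "F x = w x v* Z x" if x: "x \<in> prob_simplex" for x
  proof -
    have "(THE u. u v* U x = u \<and> (\<Sum>i\<in>UNIV. u $ i) = 1) = w x"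
      by (rule the1_equality[OF ex1[OF x] wU[OF x]])
    thus ?thesis unfolding F_def by simp
  qed
  have GF: "G x = F x" if x: "x \<in> prob_simplex" for x
    unfolding G_def Fw[OF x] w_def t_def by (simp add: vector_matrix_mul_assoc matrix_mul_assoc)
  have Fin: "F x \<in> prob_simplex" if x: "x \<in> prob_simplex" for x
  proof -
    have Zs: "\<And>i j. 0 \<le> Z x $ i $ j" "\<And>i. (\<Sum>j\<in>UNIV. Z x $ i $ j) = 1"
      using Zh x by (auto simp: doubly_stochastic_def row_stochastic_def)
    have "(\<Sum>j\<in>UNIV. (w x v* Z x) $ j) = (\<Sum>i\<in>UNIV. w x $ i * (\<Sum>j\<in>UNIV. Z x $ i $ j))"
      unfolding vm_nth by (subst sum.swap) (simp add: sum_distrib_left)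
    also have "\<dots> = 1" using wsum[OF x] by (simp add: Zs)
    finally show ?thesis unfolding Fw[OF x] prob_simplex_def
      using wnn[OF x] Zs by (auto simp: vm_nth intro!: sum_nonneg)
  qed
  define T where "T = (\<lambda>x. (\<chi> k. det (\<chi> i j. if j = k then c $ i else transpose (M x) $ i $ j) / det (transpose (M x))) :: real^'n)"
  have detnz: "det (transpose (M x)) \<noteq> 0" if x: "x \<in> prob_simplex" for x
    using invM[OF x] by (simp add: det_transpose invertible_det_nz)
  have tT: "t x = T x" if x: "x \<in> prob_simplex" for x
    using cramer[OF detnz[OF x], of "t x" c] tM[OF x] unfolding T_def by simp
  have ac: "continuous_on prob_simplex (\<lambda>x. a i (x $ i))" for i
    using hyp by (intro cont_comp_simplex) auto
  have bc: "continuous_on prob_simplex (\<lambda>x. b i (x $ i))" for i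
    using hyp by (intro cont_comp_simplex) auto
  have Mc: "continuous_on prob_simplex (\<lambda>x. M x $ i $ j)" for i j
    unfolding Ment by (cases "i = j") (auto intro!: continuous_intros ac bc)
  have Dc: "continuous_on prob_simplex (\<lambda>x. D x $ i $ j)" for i j
    unfolding Ddiag diagm_def by (cases "i = j") (auto intro!: continuous_intros ac bc)
  have Tc: "continuous_on prob_simplex (\<lambda>x. T x $ k)" for k
    unfolding T_def vec_lambda_beta
  proof (intro continuous_on_divide continuous_on_det)
    fix i j show "continuous_on prob_simplex (\<lambda>x. transpose (M x) $ i $ j)"
      unfolding transpose_def vec_lambda_beta by (rule Mc)
  next
    fix i j show "continuous_on prob_simplex (\<lambda>x. (\<chi> i j. if j = k then c $ i else transpose (M x) $ i $ j) $ i $ j)"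
      unfolding transpose_def vec_lambda_beta by (cases "j = k") (auto intro: Mc)
  qed (use detnz in auto)
  have Fc: "continuous_on prob_simplex (\<lambda>x. (T x v* D x) v* Z x)"
    unfolding vector_matrix_mult_def
    by (intro continuous_on_vec_lambda continuous_intros Tc Dc Zc[rule_format])
  have Fc2: "continuous_on prob_simplex F"
    by (rule continuous_on_cong[THEN iffD1, rotated 2, OF Fc]) (auto simp: Fw w_def tT)
  have "(\<forall>x\<in>prob_simplex. (\<exists>!u. u v* U x = u \<and> (\<Sum>i\<in>UNIV. u $ i) = 1)
                        \<and> G x = F x \<and> F x \<in> prob_simplex)
          \<and> continuous_on prob_simplex F"
    using ex1 GF Fin Fc2 by blast
  thus ?thesis unfolding Let_def G_def U_def F_def M_def D_def c_def .
qed

theorem theorem1: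
  fixes P :: "real^'n::finite^'n"
  assumes n2: "CARD('n) \<ge> 2"
    and P_stoch: "row_stochastic P"
    and P_diag: "\<forall>i. P $ i $ i = 0"
    and P_range: "\<forall>i j. P $ i $ j \<in> {0..1}"
    and P_sc: "strongly_connected_mat P"
  shows
  "(\<forall>(a::'n \<Rightarrow> real \<Rightarrow> real) (b::'n \<Rightarrow> real \<Rightarrow> real) (Z::real^'n \<Rightarrow> real^'n^'n).
      (\<forall>i. real_analytic_on (a i) {0..1} \<and> real_analytic_on (b i) {0..1}
           \<and> (\<forall>t\<in>{0..1}. a i t \<in> {0..1} \<and> b i t \<in> {0..1}
                \<and> 1 - a i t - b i t \<noteq> 0 \<and> 1 - a i t - b i t \<ge> 0))
      \<and> (\<forall>x\<in>prob_simplex. doubly_stochastic (Z x) \<and> orthogonal_matrix (Z x))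
      \<and> (\<forall>i j. continuous_on prob_simplex (\<lambda>x. Z x $ i $ j))
      \<longrightarrow>
      (let G = (\<lambda>x. transpose (matrix_inv (mat 1 - diagm a x - diagm b x ** P)
                                 ** ((mat 1 - diagm a x - diagm b x) ** Z x))
                     *v (\<chi> i. 1 / real CARD('n)));
           U = (\<lambda>x. ones_outer_n - matrix_inv (mat 1 - diagm a x - diagm b x) ** diagm b x ** (mat 1 - P));
           F = (\<lambda>x. (THE u. u v* U x = u \<and> (\<Sum>i\<in>UNIV. u $ i) = 1) v* Z x)
       in (\<forall>x\<in>prob_simplex. (\<exists>!u. u v* U x = u \<and> (\<Sum>i\<in>UNIV. u $ i) = 1)
                        \<and> G x = F x \<and> F x \<in> prob_simplex)
          \<and> continuous_on prob_simplex F))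
   \<and>
   (\<forall>(a::'n \<Rightarrow> real \<Rightarrow> real) (p::real^'n).
      (\<forall>i. real_analytic_on (a i) {0..1} \<and> (\<forall>t\<in>{0..1}. a i t \<in> {0..1}))
      \<and> (\<forall>x\<in>prob_simplex. \<forall>i j. a i (x $ i) = 1 \<and> a j (x $ j) = 1 \<longrightarrow> i = j)
      \<and> p \<in> prob_simplex \<and> p v* P = p
      \<longrightarrow>
      (let F = (\<lambda>x. if \<exists>i. a i (x $ i) = 1 then axis (THE i. a i (x $ i) = 1) 1
                    else (1 / (\<Sum>j\<in>UNIV. p $ j / (1 - a j (x $ j))))
                         *\<^sub>R (\<chi> i. p $ i / (1 - a i (x $ i))))
       in (\<forall>x\<in>prob_simplex. F x \<in> prob_simplex \<and>
             (\<forall>v\<in>prob_simplex. v v* (diagm a x + (mat 1 - diagm a x) ** P) = v \<longleftrightarrow> v = F x))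
          \<and> continuous_on prob_simplex F))"
  proof (intro conjI allI impI)
  fix a b :: "'n \<Rightarrow> real \<Rightarrow> real" and Z :: "real^'n \<Rightarrow> real^'n^'n"
  assume h: "(\<forall>i. real_analytic_on (a i) {0..1} \<and> real_analytic_on (b i) {0..1}
           \<and> (\<forall>t\<in>{0..1}. a i t \<in> {0..1} \<and> b i t \<in> {0..1}
                \<and> 1 - a i t - b i t \<noteq> 0 \<and> 1 - a i t - b i t \<ge> 0))
      \<and> (\<forall>x\<in>prob_simplex. doubly_stochastic (Z x) \<and> orthogonal_matrix (Z x))
      \<and> (\<forall>i j. continuous_on prob_simplex (\<lambda>x. Z x $ i $ j))"
  show "let G = (\<lambda>x. transpose (matrix_inv (mat 1 - diagm a x - diagm b x ** P)
                                 ** ((mat 1 - diagm a x - diagm b x) ** Z x))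
                     *v (\<chi> i. 1 / real CARD('n)));
           U = (\<lambda>x. ones_outer_n - matrix_inv (mat 1 - diagm a x - diagm b x) ** diagm b x ** (mat 1 - P));
           F = (\<lambda>x. (THE u. u v* U x = u \<and> (\<Sum>i\<in>UNIV. u $ i) = 1) v* Z x)
       in (\<forall>x\<in>prob_simplex. (\<exists>!u. u v* U x = u \<and> (\<Sum>i\<in>UNIV. u $ i) = 1)
                        \<and> G x = F x \<and> F x \<in> prob_simplex)
          \<and> continuous_on prob_simplex F"
    using h by (intro part1[OF P_stoch P_diag]) auto
next
  fix a :: "'n \<Rightarrow> real \<Rightarrow> real" and p :: "real^'n"
  assume h: "(\<forall>i. real_analytic_on (a i) {0..1} \<and> (\<forall>t\<in>{0..1}. a i t \<in> {0..1}))
      \<and> (\<forall>x\<in>prob_simplex. \<forall>i j. a i (x $ i) = 1 \<and> a j (x $ j) = 1 \<longrightarrow> i = j)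
      \<and> p \<in> prob_simplex \<and> p v* P = p"
  show "let F = (\<lambda>x. if \<exists>i. a i (x $ i) = 1 then axis (THE i. a i (x $ i) = 1) 1
                    else (1 / (\<Sum>j\<in>UNIV. p $ j / (1 - a j (x $ j))))
                         *\<^sub>R (\<chi> i. p $ i / (1 - a i (x $ i))))
       in (\<forall>x\<in>prob_simplex. F x \<in> prob_simplex \<and>
             (\<forall>v\<in>prob_simplex. v v* (diagm a x + (mat 1 - diagm a x) ** P) = v \<longleftrightarrow> v = F x))
          \<and> continuous_on prob_simplex F"
    using h by (intro part2[OF P_stoch P_sc]) auto
qed

end
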